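(* Let $G=(V,E)$ be a finite simple graph and let $T\geq 1$ be an integer. If $(s,x,y,z)$ is a feasible solution of the Infection Model $\mathrm{IM}(G,T)$, then $C=\{v\in V\colon s_v=1\}$ is a zero forcing set of $G$ that is the initial set of some zero forcing game in $\mathcal{Z}(G,T)$, and $\mathrm{pt}(G,C)\leq z\leq T$.
   Context: Zero forcing: $n=|V|$, $N(u)$ is the neighborhood of $u$. Under the standard color change rule, a filled vertex $u$ can force a non-filled vertex $v$ if $v$ is the only non-filled neighbor of $u$. A zero forcing game on $G$ with initial set $C\subseteq V$ consists of sets $C^{(0)}=C^{[0]}=C$, sets $C^{(t)}$ (vertices forced at time step $t$) with $C^{[t]}=C^{[t-1]}\cup C^{(t)}$ for $t\geq1$, and a collection $\phi(C)$ of forces $u\to v$, such that every vertex lies in exactly one set $C^{(t)}$, and each $v\in C^{(t)}$ with $t\geq 1$ is forced by exactly one neighbor $u$ (recorded as $u\to v$ in $\phi(C)$) such that $u$ and all neighbors of $u$ other than $v$ lie in $C^{[t-1]}$. The closure of $C$ is the set of filled vertices once no more forces are possible; $C$ is a zero forcing set if its closure is $V$. The propagation time $\mathrm{pt}(G,C)$ is the smallest $t^*$ with $C^{[t^*]}=V$ when at each time step all possible forces are applied simultaneously (i.e. $C^{(t)}$ is the set of all $v\notin C^{[t-1]}$ for which some $u\in C^{[t-1]}$ has $v$ as its unique neighbor outside $C^{[t-1]}$), and $\mathrm{pt}(G,C)=\infty$ if $C$ is not a zero forcing set. $\mathcal{Z}(G,T)$ denotes the family of all zero forcing games on $G$ whose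 initial set is a zero forcing set and which use at most $T$ time steps. Infection Model: let $A$ be the set of arcs containing both $(u,v)$ and $(v,u)$ for each edge $\{u,v\}\in E$, and $[T]=\{1,\dots,T\}$. The model $\mathrm{IM}(G,T)$ has variables $s_v\in\{0,1\}$ and $x_v\in\{0,1,\dots,T\}$ for $v\in V$, $y_a\in\{0,1\}$ for $a\in A$, and $z\in\{0,1,\dots,T\}$, subject to: (i) $s_v+\sum_{a=(u,v)\in A}y_a=1$ for all $v\in V$; (ii) $x_u-x_v+(T+1)y_a\leq T$ for all $a=(u,v)\in A$; (iii) $x_w-x_v+(T+1)y_a\leq T$ for all $a=(u,v)\in A$ and $w\in N(u)\setminus\{v\}$; (iv) $x_v-z\leq 0$ for all $v\in V$. Its objective is to minimize $\sum_{v\in V}s_v$. A feasible solution is one satisfying all these constraints. *)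

theory Defs
  imports Main "HOL-Library.Extended_Nat"
begin

definition simple_graph :: "'a set \<Rightarrow> ('a \<Rightarrow> 'a \<Rightarrow> bool) \<Rightarrow> bool" where
  "simple_graph V E \<longleftrightarrow> finite V
     \<and> (\<forall>u v. E u v \<longrightarrow> u \<in> V \<and> v \<in> V)
     \<and> (\<forall>u v. E u v \<longrightarrow> E v u)
     \<and> (\<forall>u. \<not> E u u)"

definition nbhd :: "'a set \<Rightarrow> ('a \<Rightarrow> 'a \<Rightarrow> bool) \<Rightarrow> 'a \<Rightarrow> 'a set" where
  "nbhd V E u = {w \<in> V. E u w}"

definition arcs :: "'a set \<Rightarrow> ('a \<Rightarrow> 'a \<Rightarrow> bool) \<Rightarrow> ('a \<times> 'a) set" where
  "arcs V E = {(u, v). u \<in> V \<and> v \<in> V \<and> E u v}"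

inductive_set zf_closure :: "'a set \<Rightarrow> ('a \<Rightarrow> 'a \<Rightarrow> bool) \<Rightarrow> 'a set \<Rightarrow> 'a set"
  for V E C where
  init: "v \<in> C \<Longrightarrow> v \<in> zf_closure V E C"
| force: "u \<in> zf_closure V E C \<Longrightarrow> v \<in> nbhd V E u \<Longrightarrow>
          (\<And>w. w \<in> nbhd V E u \<Longrightarrow> w \<noteq> v \<Longrightarrow> w \<in> zf_closure V E C) \<Longrightarrow>
          v \<in> zf_closure V E C"

definition zero_forcing_set :: "'a set \<Rightarrow> ('a \<Rightarrow> 'a \<Rightarrow> bool) \<Rightarrow> 'a set \<Rightarrow> bool" where
  "zero_forcing_set V E C \<longleftrightarrow> C \<subseteq> V \<and> zf_closure V E C = V"

definition cum :: "(nat \<Rightarrow> 'a set) \<Rightarrow> nat \<Rightarrow> 'a set" where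
  "cum Ct t = (\<Union>i\<le>t. Ct i)"

definition zf_game :: "'a set \<Rightarrow> ('a \<Rightarrow> 'a \<Rightarrow> bool) \<Rightarrow> 'a set
     \<Rightarrow> (nat \<Rightarrow> 'a set) \<Rightarrow> ('a \<times> 'a) set \<Rightarrow> bool" where
  "zf_game V E C Ct phi \<longleftrightarrow>
     Ct 0 = C
   \<and> (\<forall>t. Ct t \<subseteq> V)
   \<and> (\<forall>v\<in>V. \<exists>!t. v \<in> Ct t)
   \<and> phi \<subseteq> {(u, v). E u v \<and> (\<exists>t\<ge>1. v \<in> Ct t)}
   \<and> (\<forall>t\<ge>1. \<forall>v\<in>Ct t. \<exists>!u. (u, v) \<in> phi \<and> u \<in> nbhd V E v
         \<and> u \<in> cum Ct (t - 1) \<and> nbhd V E u - {v} \<subseteq> cum Ct (t - 1))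
   \<and> (\<forall>t\<ge>1. \<forall>v\<in>Ct t. \<forall>u. (u, v) \<in> phi \<longrightarrow>
         u \<in> cum Ct (t - 1) \<and> nbhd V E u - {v} \<subseteq> cum Ct (t - 1))"

definition in_ZGT :: "'a set \<Rightarrow> ('a \<Rightarrow> 'a \<Rightarrow> bool) \<Rightarrow> nat
     \<Rightarrow> 'a set \<Rightarrow> (nat \<Rightarrow> 'a set) \<Rightarrow> ('a \<times> 'a) set \<Rightarrow> bool" where
  "in_ZGT V E T C Ct phi \<longleftrightarrow> zero_forcing_set V E C \<and> zf_game V E C Ct phi
     \<and> (\<forall>t>T. Ct t = {})"

definition pt_step :: "'a set \<Rightarrow> ('a \<Rightarrow> 'a \<Rightarrow> bool) \<Rightarrow> 'a set \<Rightarrow> 'a set" where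
  "pt_step V E S = S \<union> {v \<in> V - S. \<exists>u\<in>S. nbhd V E u - S = {v}}"

definition prop_time :: "'a set \<Rightarrow> ('a \<Rightarrow> 'a \<Rightarrow> bool) \<Rightarrow> 'a set \<Rightarrow> enat" where
  "prop_time V E C = (if \<exists>t. (pt_step V E ^^ t) C = V
     then enat (LEAST t. (pt_step V E ^^ t) C = V) else \<infinity>)"

definition IM_feasible :: "'a set \<Rightarrow> ('a \<Rightarrow> 'a \<Rightarrow> bool) \<Rightarrow> nat
     \<Rightarrow> ('a \<Rightarrow> int) \<Rightarrow> ('a \<Rightarrow> int) \<Rightarrow> ('a \<times> 'a \<Rightarrow> int) \<Rightarrow> int \<Rightarrow> bool" where
  "IM_feasible V E T s x y z \<longleftrightarrow>
     (\<forall>v\<in>V. s v \<in> {0, 1})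
   \<and> (\<forall>v\<in>V. x v \<in> {0..int T})
   \<and> (\<forall>a\<in>arcs V E. y a \<in> {0, 1})
   \<and> z \<in> {0..int T}
   \<and> (\<forall>v\<in>V. s v + (\<Sum>a\<in>{a \<in> arcs V E. snd a = v}. y a) = 1)
   \<and> (\<forall>(u, v)\<in>arcs V E. x u - x v + (int T + 1) * y (u, v) \<le> int T)
   \<and> (\<forall>(u, v)\<in>arcs V E. \<forall>w\<in>nbhd V E u - {v}.
         x w - x v + (int T + 1) * y (u, v) \<le> int T)
   \<and> (\<forall>v\<in>V. x v - z \<le> 0)"

end

theory Submission
  imports Defs
begin

lemma sum_ge_one:
  fixes f :: "'b \<Rightarrow> int"
  assumes "finite A" "\<forall>a\<in>A. f a \<in> {0,1}" "a \<in> A" "f a = 1"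
  shows "sum f A \<ge> 1"
proof -
  have "sum f {a} \<le> sum f A"
    using assms by (intro sum_mono2) auto
  thus ?thesis using assms by simp
qed

lemma sum_ge_two:
  fixes f :: "'b \<Rightarrow> int"
  assumes "finite A" "\<forall>a\<in>A. f a \<in> {0,1}" "a \<in> A" "b \<in> A" "f a = 1" "f b = 1" "a \<noteq> b"
  shows "sum f A \<ge> 2"
proof -
  have "sum f {a,b} \<le> sum f A"
    using assms by (intro sum_mono2) auto
  thus ?thesis using assms by simp
qed

lemma sum_pos_ex:
  fixes f :: "'b \<Rightarrow> int"
  assumes "sum f A \<noteq> 0"
  shows "\<exists>a\<in>A. f a \<noteq> 0"
  using assms by (metis sum.neutral)

theorem theorem3p1:
  fixes V :: "'a set" and E :: "'a \<Rightarrow> 'a \<Rightarrow> bool" and T :: nat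
    and s x :: "'a \<Rightarrow> int" and y :: "'a \<times> 'a \<Rightarrow> int" and z :: int
  assumes "simple_graph V E"
    and "T \<ge> 1"
    and "IM_feasible V E T s x y z"
  shows "zero_forcing_set V E {v \<in> V. s v = 1}
       \<and> (\<exists>Ct phi. in_ZGT V E T {v \<in> V. s v = 1} Ct phi)
       \<and> prop_time V E {v \<in> V. s v = 1} \<le> enat (nat z)
       \<and> z \<le> int T"
proof -
  define C where "C = {v \<in> V. s v = 1}"
  have finV: "finite V" and EV: "\<And>u v. E u v \<Longrightarrow> u \<in> V \<and> v \<in> V"
    and Esym: "\<And>u v. E u v \<Longrightarrow> E v u"
    using assms(1) unfolding simple_graph_def by auto
  have s01: "\<And>v. v \<in> V \<Longrightarrow> s v \<in> {0,1}"
    and xr: "\<And>v. v \<in> V \<Longrightarrow> 0 \<le> x v \<and> x v \<le> int T"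
    and y01: "\<And>a. a \<in> arcs V E \<Longrightarrow> y a \<in> {0,1}"
    and zr: "0 \<le> z \<and> z \<le> int T"
    and sumc: "\<And>v. v \<in> V \<Longrightarrow> s v + (\<Sum>a\<in>{a \<in> arcs V E. snd a = v}. y a) = 1"
    and c2: "\<And>u v. (u,v) \<in> arcs V E \<Longrightarrow> x u - x v + (int T + 1) * y (u, v) \<le> int T"
    and c3: "\<And>u v w. (u,v) \<in> arcs V E \<Longrightarrow> w \<in> nbhd V E u - {v} \<Longrightarrow>
         x w - x v + (int T + 1) * y (u, v) \<le> int T"
    and c4: "\<And>v. v \<in> V \<Longrightarrow> x v \<le> z"
    using assms(3) unfolding IM_feasible_def by auto
  have finA: "\<And>v. finite {a \<in> arcs V E. snd a = v}"
  proof -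
    fix v
    have "arcs V E \<subseteq> V \<times> V" unfolding arcs_def by auto
    thus "finite {a \<in> arcs V E. snd a = v}"
      using finV by (metis (no_types, lifting) finite_SigmaI finite_subset mem_Collect_eq subsetI)
  qed
  have y01': "\<forall>a\<in>{a \<in> arcs V E. snd a = v}. y a \<in> {0,1}" for v using y01 by auto
  have arcE: "(u,v) \<in> arcs V E \<longleftrightarrow> E u v" for u v
    unfolding arcs_def using EV by auto
  have nbE: "w \<in> nbhd V E u \<longleftrightarrow> E u w" for u w
    unfolding nbhd_def using EV by auto
  have F1: "\<exists>u. E u v \<and> y (u,v) = 1" if "v \<in> V" "s v \<noteq> 1" for v
  proof -
    have "s v = 0" using s01[OF that(1)] that(2) by auto
    hence "(\<Sum>a\<in>{a \<in> arcs V E. snd a = v}. y a) \<noteq> 0" using sumc[OF that(1)] by simp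
    then obtain a where a: "a \<in> {a \<in> arcs V E. snd a = v}" "y a \<noteq> 0"
      using sum_pos_ex by blast
    then obtain u where "a = (u,v)" by (cases a) auto
    moreover have "(u,v) \<in> arcs V E" using a \<open>a = (u,v)\<close> by simp
    ultimately show ?thesis using a y01[of "(u,v)"] arcE by auto
  qed
  have F2: "x u < x v \<and> (\<forall>w. E u w \<longrightarrow> w \<noteq> v \<longrightarrow> x w < x v) \<and> s v = 0 \<and> v \<in> V \<and> u \<in> V"
    if "E u v" "y (u,v) = 1" for u v
  proof -
    have a: "(u,v) \<in> arcs V E" using that arcE by simp
    have "x u < x v" using c2[OF a] that by simp
    moreover have "\<forall>w. E u w \<longrightarrow> w \<noteq> v \<longrightarrow> x w < x v"
      using c3[OF a] that nbE by force
    moreover have "s v = 0"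
    proof -
      have "(\<Sum>a\<in>{a \<in> arcs V E. snd a = v}. y a) \<ge> 1"
        using sum_ge_one[OF finA y01'] a that by auto
      thus ?thesis using sumc[of v] s01[of v] EV[OF that(1)] by auto
    qed
    ultimately show ?thesis using EV[OF that(1)] by auto
  qed
  have F3: "u = u'" if h: "E u v" "y (u,v) = 1" "E u' v" "y (u',v) = 1" for u u' v
  proof (rule ccontr)
    assume ne: "u \<noteq> u'"
    have m1: "(u,v) \<in> {a \<in> arcs V E. snd a = v}" using h(1) arcE by simp
    have m2: "(u',v) \<in> {a \<in> arcs V E. snd a = v}" using h(3) arcE by simp
    have "(\<Sum>a\<in>{a \<in> arcs V E. snd a = v}. y a) \<ge> 2"
      by (rule sum_ge_two[OF finA[of v] y01'[of v] m1 m2 h(2) h(4)]) (use ne in simp)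
    moreover have "v \<in> V" using EV[OF h(1)] by simp
    ultimately show False using sumc[of v] s01[of v] by auto
  qed
  have F4: "x v \<ge> 1" if vv: "v \<in> V" "s v \<noteq> 1" for v
  proof -
    obtain u where u: "E u v" "y (u,v) = 1" using F1 vv by blast
    have "x u < x v" "u \<in> V" using F2[OF u] by auto
    moreover have "x u \<ge> 0" using xr[OF \<open>u \<in> V\<close>] by simp
    ultimately show ?thesis by simp
  qed
  have clV: "zf_closure V E C \<subseteq> V"
  proof
    fix v assume "v \<in> zf_closure V E C"
    thus "v \<in> V"
    proof (cases rule: zf_closure.cases)
      case init thus ?thesis by (simp add: C_def)
    next
      case (force u)
      from force(2) show ?thesis by (simp add: nbhd_def)
    qed
  qed
  have inCl: "v \<in> zf_closure V E C" if "v \<in> V" for v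
  proof -
    have "\<forall>v\<in>V. x v = int n \<longrightarrow> v \<in> zf_closure V E C" for n
    proof (induction n rule: less_induct)
      case (less n)
      show ?case
      proof (intro ballI impI)
        fix v assume v: "v \<in> V" "x v = int n"
        show "v \<in> zf_closure V E C"
        proof (cases "s v = 1")
          case True thus ?thesis using v by (auto simp: C_def intro: zf_closure.init)
        next
          case False
          then obtain u where u: "E u v" "y (u,v) = 1" using F1 v by blast
          note f = F2[OF u]
          have xu: "u \<in> zf_closure V E C"
            using less[of "nat (x u)"] f v xr[of u] by auto
          show ?thesis
          proof (rule zf_closure.force[OF xu])
            show "v \<in> nbhd V E u" using nbE u by simp
            fix w assume "w \<in> nbhd V E u" "w \<noteq> v"
            hence "E u w" "w \<in> V" using nbE EV by auto
            thus "w \<in> zf_closure V E C"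
              using less[of "nat (x w)"] f v xr[of w] \<open>w \<noteq> v\<close> by auto
          qed
        qed
      qed
    qed
    thus ?thesis using that xr[OF that] by (metis nonneg_int_cases)
  qed
  have zfs: "zero_forcing_set V E C"
    unfolding zero_forcing_set_def using clV inCl by (auto simp: C_def)
  define Ct where "Ct t = (if t = 0 then C else {v \<in> V. s v = 0 \<and> x v = int t})" for t
  define phi where "phi = {(u,v). E u v \<and> y (u,v) = 1}"
  have incum: "v \<in> cum Ct (nat (x v))" if "v \<in> V" for v
  proof (cases "s v = 1")
    case True thus ?thesis using that unfolding cum_def by (auto simp: Ct_def C_def)
  next
    case False
    hence "s v = 0" using s01 that by auto
    moreover have "x v \<ge> 1" using F4 that False by auto
    ultimately have "v \<in> Ct (nat (x v))" using that by (auto simp: Ct_def)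
    thus ?thesis unfolding cum_def by auto
  qed
  have cum_mono: "cum Ct a \<subseteq> cum Ct b" if "a \<le> b" for a b
    unfolding cum_def using that by (meson UN_mono atMost_iff order_trans subset_refl subsetI)
  have lower: "w \<in> cum Ct (t - 1)" if "w \<in> V" "x w < int t" for w t
  proof -
    have "nat (x w) \<le> t - 1" using that xr[of w] by linarith
    thus ?thesis using incum[OF that(1)] cum_mono[of "nat (x w)" "t - 1"] by blast
  qed
  have game_force: "\<exists>!u. (u, v) \<in> phi \<and> u \<in> nbhd V E v
         \<and> u \<in> cum Ct (t - 1) \<and> nbhd V E u - {v} \<subseteq> cum Ct (t - 1)"
    if "t \<ge> 1" "v \<in> Ct t" for t v
  proof -
    have v: "v \<in> V" "s v = 0" "x v = int t" using that by (auto simp: Ct_def split: if_splits)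
    obtain u where u: "E u v" "y (u,v) = 1" using F1 v by fastforce
    note f = F2[OF u]
    have P: "(u, v) \<in> phi \<and> u \<in> nbhd V E v
         \<and> u \<in> cum Ct (t - 1) \<and> nbhd V E u - {v} \<subseteq> cum Ct (t - 1)"
    proof (intro conjI)
      show "(u, v) \<in> phi" using u phi_def by simp
      show "u \<in> nbhd V E v" using nbE Esym u by simp
      show "u \<in> cum Ct (t - 1)" using lower f v by simp
      show "nbhd V E u - {v} \<subseteq> cum Ct (t - 1)"
        using lower f v nbE EV by (metis DiffE insertCI subsetI)
    qed
    show ?thesis
    proof (rule ex1I[of _ u])
      show "(u, v) \<in> phi \<and> u \<in> nbhd V E v
         \<and> u \<in> cum Ct (t - 1) \<and> nbhd V E u - {v} \<subseteq> cum Ct (t - 1)" by (rule P)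
      fix u' assume "(u', v) \<in> phi \<and> u' \<in> nbhd V E v
         \<and> u' \<in> cum Ct (t - 1) \<and> nbhd V E u' - {v} \<subseteq> cum Ct (t - 1)"
      hence "E u' v" "y (u',v) = 1" by (auto simp: phi_def)
      thus "u' = u" using F3 u by blast
    qed
  qed
  have game_all: "u \<in> cum Ct (t - 1) \<and> nbhd V E u - {v} \<subseteq> cum Ct (t - 1)"
    if "t \<ge> 1" "v \<in> Ct t" "(u,v) \<in> phi" for t v u
  proof -
    have v: "v \<in> V" "s v = 0" "x v = int t" using that by (auto simp: Ct_def split: if_splits)
    have u: "E u v" "y (u,v) = 1" using that by (auto simp: phi_def)
    note f = F2[OF u]
    show ?thesis
      using lower f v nbE EV by (metis DiffE insertCI subsetI)
  qed
  have uniq: "\<exists>!t. v \<in> Ct t" if "v \<in> V" for v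
  proof (cases "s v = 1")
    case True
    show ?thesis by (rule ex1I[of _ 0]) (use True that in \<open>auto simp: Ct_def C_def split: if_splits\<close>)
  next
    case False
    hence "s v = 0" using s01 that by auto
    moreover have "x v \<ge> 1" using F4 that False by auto
    ultimately show ?thesis
      by (intro ex1I[of _ "nat (x v)"]) (use that in \<open>auto simp: Ct_def C_def split: if_splits\<close>)
  qed
  have phisub: "phi \<subseteq> {(u, v). E u v \<and> (\<exists>t\<ge>1. v \<in> Ct t)}"
  proof
    fix p assume "p \<in> phi"
    then obtain u v where p: "p = (u,v)" "E u v" "y (u,v) = 1" by (auto simp: phi_def)
    note f = F2[OF p(2,3)]
    have "x v \<ge> 1" using F4 f by auto
    hence "v \<in> Ct (nat (x v))" "nat (x v) \<ge> 1" using f by (auto simp: Ct_def)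
    thus "p \<in> {(u, v). E u v \<and> (\<exists>t\<ge>1. v \<in> Ct t)}" using p by auto
  qed
  have empty: "Ct t = {}" if "t > T" for t
    using that xr by (auto simp: Ct_def) (metis of_nat_less_iff not_le)
  have game: "in_ZGT V E T C Ct phi"
    unfolding in_ZGT_def zf_game_def
    using zfs uniq phisub game_force game_all empty
    by (auto simp: Ct_def C_def)
  have stepV: "(pt_step V E ^^ t) C \<subseteq> V" for t
    by (induction t) (auto simp: pt_step_def C_def)
  have Cin: "C \<subseteq> (pt_step V E ^^ t) C" for t
    by (induction t) (auto simp: pt_step_def)
  have reach: "{v\<in>V. x v \<le> int t} \<subseteq> (pt_step V E ^^ t) C" for t
  proof (induction t)
    case 0
    show ?case using F4 by (auto simp: C_def) (metis not_one_le_zero order_trans)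
  next
    case (Suc t)
    define S where "S = (pt_step V E ^^ t) C"
    show ?case
    proof
      fix v assume v: "v \<in> {v\<in>V. x v \<le> int (Suc t)}"
      show "v \<in> (pt_step V E ^^ Suc t) C"
      proof (cases "v \<in> S")
        case True thus ?thesis by (simp add: S_def pt_step_def)
      next
        case False
        hence xv: "x v = int (Suc t)" using Suc v S_def by fastforce
        have "s v \<noteq> 1"
        proof
          assume "s v = 1"
          hence "v \<in> S" using v Cin by (auto simp: S_def C_def)
          thus False using False by simp
        qed
        then obtain u where u: "E u v" "y (u,v) = 1" using F1 v by blast
        note f = F2[OF u]
        have "u \<in> S" using Suc f xv S_def by auto
        moreover have "nbhd V E u - S = {v}"
        proof
          show "nbhd V E u - S \<subseteq> {v}"
          proof
            fix w assume w: "w \<in> nbhd V E u - S"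
            hence "E u w" "w \<in> V" using nbE EV by auto
            show "w \<in> {v}"
            proof (rule ccontr)
              assume "w \<notin> {v}"
              hence "x w < x v" using f \<open>E u w\<close> by auto
              hence "w \<in> S" using Suc xv \<open>w \<in> V\<close> S_def by auto
              thus False using w by simp
            qed
          qed
          show "{v} \<subseteq> nbhd V E u - S" using False u nbE by auto
        qed
        ultimately show ?thesis using v False by (auto simp: S_def pt_step_def)
      qed
    qed
  qed
  have full: "(pt_step V E ^^ nat z) C = V"
    using stepV reach[of "nat z"] c4 zr by fastforce
  have pt: "prop_time V E C \<le> enat (nat z)"
  proof -
    have "(LEAST t. (pt_step V E ^^ t) C = V) \<le> nat z" using full by (rule Least_le)
    thus ?thesis unfolding prop_time_def using full by auto
  qed
  show ?thesis using zfs game pt zr unfolding C_def by blast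
qed

end
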